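(* Let $\bar A=\{A_i\}$ be a partition with $A_j\in(P_j,Q_j)$ for all $j$, and let $x\in(P_i,Q_i)$. Then it is impossible to have simultaneously $T_ix\in[A_{\rho(i)+1},Q_{\rho(i)+1})$ and $T_{i-1}x\in(P_{\theta(i-1)},A_{\theta(i-1)}]$.
   Context: Setting. Fix $g\ge 2$; indices are mod $8g-4$. Let $\mathcal F$ be the regular hyperbolic $(8g-4)$-gon in the unit disk centered at $0$ with all interior angles $\pi/2$, sides labeled $1,\dots,8g-4$ counterclockwise, side $i$ joining vertices $V_i$ and $V_{i+1}$. The complete geodesic extending side $i$ goes from $P_i$ (beyond $V_i$) to $Q_{i+1}$ (beyond $V_{i+1}$) on the unit circle; counterclockwise order $P_1,Q_1,P_2,Q_2,\dots,P_{8g-4},Q_{8g-4}$. $\sigma(i)=4g-i$ ($i$ odd), $\sigma(i)=2-i$ ($i$ even), $\rho(i)=\sigma(i)+1$, $\theta(i)=\sigma(i)-1$. $T_i$ is the Möbius transformation mapping side $i$ onto side $\sigma(i)$, with isometric circle the geodesic $P_iQ_{i+1}$, mapped onto the geodesic $Q_{\sigma(i)+1}P_{\sigma(i)}$, inside to outside. Arcs $[A,B)$, $(A,B]$, $(A,B)$ are counterclockwise from $A$ to $B$. *)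

theory Defs
  imports "HOL-Analysis.Analysis"
begin

definition nsides :: "int \<Rightarrow> int" where
  "nsides g = 8 * g - 4"

definition idx :: "int \<Rightarrow> int \<Rightarrow> int" where
  "idx g k = ((k - 1) mod nsides g) + 1"

definition sigma :: "int \<Rightarrow> int \<Rightarrow> int" where
  "sigma g i = (if odd i then 4 * g - i else 2 - i)"

definition rho :: "int \<Rightarrow> int \<Rightarrow> int" where
  "rho g i = sigma g i + 1"

definition theta :: "int \<Rightarrow> int \<Rightarrow> int" where
  "theta g i = sigma g i - 1"

(* direction (argument) of the perpendicular from 0 to side i;
   vertex V_k sits at argument 2 pi (k-1)/N, so side i (from V_i to V_(i+1))
   has its midpoint at argument 2 pi (i - 1/2)/N *)
definition side_dir :: "int \<Rightarrow> int \<Rightarrow> real" where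
  "side_dir g i = 2 * pi * (real_of_int i - 1/2) / real_of_int (nsides g)"

(* cosh h, sinh h, where h = hyperbolic distance from 0 to each side of the
   regular N-gon with interior angles pi/2: cosh h = cos(pi/4)/sin(pi/N) *)
definition ch :: "int \<Rightarrow> real" where
  "ch g = 1 / (sqrt 2 * sin (pi / real_of_int (nsides g)))"

definition sh :: "int \<Rightarrow> real" where
  "sh g = sqrt ((ch g)\<^sup>2 - 1)"

(* half the angular width of the ideal endpoints of a side geodesic:
   cos beta = tanh h *)
definition beta :: "int \<Rightarrow> real" where
  "beta g = arccos (sh g / ch g)"

(* endpoints on the unit circle of the geodesic extending side i:
   P_i beyond V_i, Q_(i+1) beyond V_(i+1) *)
definition Pt :: "int \<Rightarrow> int \<Rightarrow> complex" where
  "Pt g i = cis (side_dir g i - beta g)"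

definition Qt :: "int \<Rightarrow> int \<Rightarrow> complex" where
  "Qt g i = cis (side_dir g (i - 1) + beta g)"

(* hyperbolic translation along the real diameter by 2h; its isometric circle
   is the geodesic at distance h from 0 perpendicular to direction pi, which it
   maps onto the geodesic perpendicular to direction 0 *)
definition transl :: "int \<Rightarrow> complex \<Rightarrow> complex" where
  "transl g z = (z * of_real (ch g) + of_real (sh g)) / (z * of_real (sh g) + of_real (ch g))"

(* T_i: the Moebius transformation mapping side i onto side sigma(i), with
   isometric circle P_i Q_(i+1), mapped onto Q_(sigma(i)+1) P_(sigma(i)) *)
definition Tmap :: "int \<Rightarrow> int \<Rightarrow> complex \<Rightarrow> complex" where
  "Tmap g i z = cis (side_dir g (sigma g i)) * transl g (cis (pi - side_dir g i) * z)"

definition ccw_angle :: "complex \<Rightarrow> complex \<Rightarrow> real" where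
  "ccw_angle a z = (if Arg (z / a) < 0 then Arg (z / a) + 2 * pi else Arg (z / a))"

definition arc_oo :: "complex \<Rightarrow> complex \<Rightarrow> complex set" where
  "arc_oo a b = {z. cmod z = 1 \<and> 0 < ccw_angle a z \<and> ccw_angle a z < ccw_angle a b}"

definition arc_co :: "complex \<Rightarrow> complex \<Rightarrow> complex set" where
  "arc_co a b = {z. cmod z = 1 \<and> ccw_angle a z < ccw_angle a b}"

definition arc_oc :: "complex \<Rightarrow> complex \<Rightarrow> complex set" where
  "arc_oc a b = {z. cmod z = 1 \<and> 0 < ccw_angle a z \<and> ccw_angle a z \<le> ccw_angle a b}"

end

theory Submission
  imports Defs
begin


lemma cis_minus_2pi: "cis (d - 2*pi) = cis d"
  by (simp add: complex_eq_iff cos_diff sin_diff)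

lemma cis_plus_2pi: "cis (d + 2*pi) = cis d"
  by (simp add: complex_eq_iff)

lemma unit_cis_Arg: "cmod z = 1 \<Longrightarrow> cis (Arg z) = z"
proof -
  assume a: "cmod z = 1"
  then have "z \<noteq> 0" by auto
  then have "cis (Arg z) = sgn z" by (rule cis_Arg)
  also have "sgn z = z" using a by (simp add: sgn_div_norm)
  finally show ?thesis .
qed

lemma ccw_cis:
  assumes "cmod z = 1" "-pi < s" "s \<le> pi"
  shows "ccw_angle (cis s) z = (if s \<le> Arg z then Arg z - s else Arg z - s + 2*pi)"
proof -
  define d where "d = Arg z - s"
  have z: "z = cis (Arg z)" using unit_cis_Arg[OF assms(1)] by simp
  have q: "z / cis s = cis d" unfolding d_def by (subst z) (simp add: cis_divide)
  have b: "-pi < Arg z" "Arg z \<le> pi" using Arg_bounded by auto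
  have A: "Arg (z / cis s) = (if d \<le> pi then (if -pi < d then d else d + 2*pi) else d - 2*pi)"
  proof -
    consider "-pi < d" "d \<le> pi" | "pi < d" | "d \<le> -pi" by linarith
    then show ?thesis
    proof cases
      case 1 then show ?thesis using q Arg_cis by auto
    next
      case 2
      have "Arg (cis (d - 2*pi)) = d - 2*pi" using 2 b assms d_def by (intro Arg_cis) auto
      then show ?thesis using 2 q cis_minus_2pi by auto
    next
      case 3
      have "Arg (cis (d + 2*pi)) = d + 2*pi" using 3 b assms d_def by (intro Arg_cis) auto
      moreover have "d \<le> pi" "\<not> -pi < d" using 3 pi_gt_zero by linarith+
      ultimately show ?thesis using q cis_plus_2pi by simp
    qed
  qed
  show ?thesis unfolding ccw_angle_def A using b assms d_def by auto
qed

lemma ccw_cis_cis: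
  assumes "-pi < s" "s < t" "t \<le> pi"
  shows "ccw_angle (cis s) (cis t) = t - s"
proof -
  have "Arg (cis t) = t" using assms by (intro Arg_cis) auto
  then show ?thesis using ccw_cis[of "cis t" s] assms by simp
qed

lemma arc_oo_Arg:
  assumes "-pi < s" "s < t" "t \<le> pi" "z \<in> arc_oo (cis s) (cis t)"
  shows "s < Arg z \<and> Arg z < t \<and> cmod z = 1"
  using assms ccw_cis[of z s] ccw_cis_cis[OF assms(1-3)] Arg_bounded[of z]
  unfolding arc_oo_def by (auto split: if_splits)

lemma arc_co_Arg:
  assumes "-pi < s" "s < t" "t \<le> pi" "z \<in> arc_co (cis s) (cis t)"
  shows "s \<le> Arg z \<and> Arg z < t \<and> cmod z = 1"
  using assms ccw_cis[of z s] ccw_cis_cis[OF assms(1-3)] Arg_bounded[of z]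
  unfolding arc_co_def by (auto split: if_splits)

lemma arc_oc_Arg:
  assumes "-pi < s" "s < t" "t \<le> pi" "z \<in> arc_oc (cis s) (cis t)"
  shows "s < Arg z \<and> Arg z \<le> t \<and> cmod z = 1"
  using assms ccw_cis[of z s] ccw_cis_cis[OF assms(1-3)] Arg_bounded[of z]
  unfolding arc_oc_def by (auto split: if_splits)

lemma ccw_rot: "c \<noteq> 0 \<Longrightarrow> ccw_angle (c*a) (c*z) = ccw_angle a z"
  unfolding ccw_angle_def by simp

lemma arc_oo_rot: "cmod c = 1 \<Longrightarrow> (c*z \<in> arc_oo (c*a) (c*b)) = (z \<in> arc_oo a b)"
proof -
  assume "cmod c = 1" then have "c \<noteq> 0" by auto
  then show ?thesis unfolding arc_oo_def using \<open>cmod c = 1\<close> by (simp add: ccw_rot norm_mult)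
qed
lemma arc_co_rot: "cmod c = 1 \<Longrightarrow> (c*z \<in> arc_co (c*a) (c*b)) = (z \<in> arc_co a b)"
proof -
  assume "cmod c = 1" then have "c \<noteq> 0" by auto
  then show ?thesis unfolding arc_co_def using \<open>cmod c = 1\<close> by (simp add: ccw_rot norm_mult)
qed
lemma arc_oc_rot: "cmod c = 1 \<Longrightarrow> (c*z \<in> arc_oc (c*a) (c*b)) = (z \<in> arc_oc a b)"
proof -
  assume "cmod c = 1" then have "c \<noteq> 0" by auto
  then show ?thesis unfolding arc_oc_def using \<open>cmod c = 1\<close> by (simp add: ccw_rot norm_mult)
qed

lemma tan_ge_self:
  assumes "0 \<le> x" "x < pi/2"
  shows "x \<le> tan x"
proof -
  have "(\<lambda>t. tan t - t) 0 \<le> (\<lambda>t. tan t - t) x"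
  proof (rule DERIV_nonneg_imp_nondecreasing[of 0 x])
    fix t assume t: "0 \<le> t" "t \<le> x"
    have c: "cos t \<noteq> 0" using t assms cos_gt_zero_pi[of t] by auto
    have "((\<lambda>t. tan t - t) has_real_derivative (inverse ((cos t)\<^sup>2) - 1)) (at t)"
      by (auto intro!: derivative_eq_intros simp: c)
    moreover have "inverse ((cos t)\<^sup>2) - 1 \<ge> 0"
    proof -
      have "(cos t)\<^sup>2 \<le> 1" by (simp add: cos_squared_eq)
      moreover have "(cos t)\<^sup>2 > 0" using c by simp
      ultimately show ?thesis by (simp add: one_le_inverse)
    qed
    ultimately show "\<exists>y. ((\<lambda>t. tan t - t) has_real_derivative y) (at t) \<and> 0 \<le> y" by blast
  qed (use assms in auto)
  then show ?thesis by simp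
qed



lemma transl_S:
  fixes c s :: real and u :: complex
  assumes cs: "c^2 - s^2 = 1" "c > 0" "s \<ge> 0" and u: "cmod u = 1" "Re u \<noteq> -1"
  shows "Im ((u * of_real c + of_real s)/(u * of_real s + of_real c)) / (1 + Re((u * of_real c + of_real s)/(u * of_real s + of_real c))) = (1/(c+s)^2) * (Im u/(1+Re u))"
proof -
  obtain p q where uq: "u = Complex p q" by (cases u) auto
  have pq: "p^2 + q^2 = 1" using u uq by (simp add: cmod_def)
  have "p^2 \<le> 1" using pq by (metis le_add_same_cancel1 zero_le_power2)
  then have "\<bar>p\<bar> \<le> 1" by (simp add: abs_square_le_1)
  then have p1: "p \<ge> -1" "p \<noteq> -1" using u uq by auto
  have pp: "1 + p > 0" using p1 by auto
  define D where "D = (p * s + c)^2 + (q * s)^2"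
  have ps: "p * s + c > 0"
  proof -
    have "p * s \<ge> -s" using p1 cs by (metis mult_minus_left mult_right_mono mult_1)
    moreover have "c > s" using cs by (intro power_less_imp_less_base[of s 2 c]) auto
    ultimately show ?thesis by linarith
  qed
  have D: "D > 0" unfolding D_def using ps by (simp add: add_pos_nonneg)
  have den: "u * of_real s + of_real c = Complex (p * s + c) (q * s)" by (simp add: uq complex_eq_iff)
  have num: "u * of_real c + of_real s = Complex (p * c + s) (q * c)" by (simp add: uq complex_eq_iff)
  have Re: "Re((u * of_real c + of_real s)/(u * of_real s + of_real c)) = ((p * c+s)*(p * s+c) + q * c*(q * s))/D"
    unfolding den num D_def by (simp add: Re_divide cmod_def power2_eq_square)
  have Im: "Im((u * of_real c + of_real s)/(u * of_real s + of_real c)) = q/D"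
  proof -
    have "Im((u * of_real c + of_real s)/(u * of_real s + of_real c)) = (q * c*(p * s+c) - (p * c+s)*(q * s))/D"
      unfolding den num D_def by (simp add: Im_divide cmod_def power2_eq_square)
    also have "q * c*(p * s+c) - (p * c+s)*(q * s) = q*(c^2 - s^2)" by (simp add: algebra_simps power2_eq_square)
    finally show ?thesis using cs by simp
  qed
  have R1: "1 + Re((u * of_real c + of_real s)/(u * of_real s + of_real c)) = (c+s)^2*(1+p)/D"
  proof -
    have "D + ((p * c + s) * (p * s + c) + q * c * (q * s)) - (c+s)^2*(1+p) = (p^2 + q^2 - 1)*(s^2 + c * s)"
      unfolding D_def by (simp add: power2_eq_square algebra_simps)
    then have "D + ((p * c + s) * (p * s + c) + q * c * (q * s)) = (c+s)^2*(1+p)" using pq by simp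
    then show ?thesis unfolding Re using D by (simp add: field_simps)
  qed
  have cs0: "c + s > 0" using cs by simp
  have "Im u = q" "Re u = p" using uq by auto
  then show ?thesis unfolding R1 Im using D pp cs0 by (simp add: field_simps)
qed



lemma numeric:
  fixes g :: int
  assumes g: "g \<ge> 2"
  defines "n \<equiv> real_of_int (nsides g)"
  defines "d \<equiv> 2*pi/n"
  defines "b \<equiv> beta g"
  shows "12 \<le> n" "0 < d" "d < 2/3" "ch g > 1" "sh g > 0" "(ch g)^2 - (sh g)^2 = 1"
    "0 < b" "b < pi/2" "d/2 < b" "b < d"
    "1/(ch g + sh g)^2 \<le> tan (d/4) * tan (d - b/2)"
proof -
  show n12: "12 \<le> n" unfolding n_def nsides_def using g by simp
  show d0: "0 < d" unfolding d_def using n12 by simp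
  have dle: "d \<le> pi/6" unfolding d_def using n12 by (simp add: field_simps)
  show d23: "d < 2/3" using dle pi_less_4 by linarith
  define s0 where "s0 = sin (d/2)"
  have pin: "pi / n = d/2" unfolding d_def by simp
  have chd: "ch g = 1/(sqrt 2 * s0)" unfolding ch_def s0_def n_def[symmetric] pin ..
  have s0p: "s0 > 0" unfolding s0_def using d0 d23 pi_gt3 by (intro sin_gt_zero) auto
  have s0le: "s0 \<le> d/2" unfolding s0_def using d0 by (intro sin_x_le_x) auto
  have s0lt: "s0 < sqrt 2 / 2"
  proof -
    have "sin (d/2) < sin (pi/4)" using d0 dle pi_gt3 by (subst sin_mono_less_eq) auto
    then show ?thesis unfolding s0_def sin_45 .
  qed
  have sq2: "sqrt 2 * sqrt 2 = 2" by simp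
  have sq2p: "sqrt 2 > 0" by simp
  have chsq: "(ch g)^2 = 1/(2* s0^2)" unfolding chd by (simp add: power2_eq_square)
  have ch0: "ch g > 0" unfolding chd using s0p by simp
  have "sqrt 2 * s0 < 1"
  proof -
    have "sqrt 2 * s0 < sqrt 2 * (sqrt 2 / 2)" using s0lt sq2p by (rule mult_strict_left_mono)
    moreover have "sqrt 2 * (sqrt 2 / 2) = 1" by simp
    ultimately show ?thesis by linarith
  qed
  then show ch1: "ch g > 1" unfolding chd using s0p by (simp add: field_simps)
  have shsq: "(sh g)^2 = (ch g)^2 - 1" unfolding sh_def using ch1
    by (simp add: one_less_power less_imp_le)
  show sh0: "sh g > 0" unfolding sh_def using ch1 by (simp add: one_less_power)
  show chsh: "(ch g)^2 - (sh g)^2 = 1" using shsq by simp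
  have shch: "sh g < ch g" using shsq sh0 ch0 by (intro power_less_imp_less_base[of "sh g" 2 "ch g"]) auto
  define y where "y = sh g / ch g"
  have y0: "0 < y" "y < 1" unfolding y_def using sh0 ch0 shch by auto
  have cb: "cos b = y" unfolding b_def beta_def y_def[symmetric] using y0 by simp
  have sb: "sin b = 1 / ch g"
  proof -
    have "sin b = sqrt (1 - y^2)" unfolding b_def beta_def y_def[symmetric] using y0 by (simp add: sin_arccos)
    also have "1 - y^2 = (1/ch g)^2" unfolding y_def using ch0 shsq by (simp add: field_simps)
    finally show ?thesis using ch0 by simp
  qed
  have bb: "0 < b \<and> b < pi" unfolding b_def beta_def y_def[symmetric] using y0 by (intro arccos_lt_bounded) auto
  then show b0: "0 < b" by simp
  show bpi2: "b < pi/2"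
  proof (rule ccontr)
    assume "\<not> b < pi/2"
    then have "cos b \<le> cos (pi/2)" using bb by (intro cos_monotone_0_pi_le) auto
    then have "cos b \<le> 0" by simp
    then show False using cb y0 by simp
  qed
  have sbs: "sin b = sqrt 2 * s0" using sb chd s0p by simp
  show "d/2 < b"
  proof -
    have "sqrt 2 > 1" by simp
    then have "sin (d/2) < sin b" unfolding sbs s0_def[symmetric] using s0p by simp
    then show ?thesis using d0 dle b0 bpi2 pi_gt3 by (subst (asm) sin_mono_less_eq) auto
  qed
  show "b < d"
  proof -
    have cd: "cos (d/2) > sqrt 2 / 2" unfolding cos_45[symmetric] using d0 dle pi_gt3 by (intro cos_monotone_0_pi) auto
    have "sin d = 2 * s0 * cos (d/2)" unfolding s0_def using sin_double[of "d/2"] by simp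
    moreover have "2 * s0 * cos (d/2) > 2 * s0 * (sqrt 2 / 2)" using cd s0p by simp
    ultimately have "sin b < sin d" unfolding sbs by (simp add: mult.commute)
    then show ?thesis using d0 dle b0 bpi2 pi_gt3 by (subst (asm) sin_mono_less_eq) auto
  qed
  have tb: "tan (b/2) = 1/(ch g + sh g)"
  proof -
    have "tan (b/2) = sin b / (cos b + 1)" using tan_half[of "b/2"] by simp
    also have "\<dots> = 1/(ch g + sh g)" unfolding sb cb y_def using ch0 sh0 by (simp add: field_simps)
    finally show ?thesis .
  qed
  define t where "t = 1/(ch g + sh g)"
  have t0: "t > 0" unfolding t_def using ch0 sh0 by simp
  have ch2: "(ch g)^2 \<ge> 2/d^2"
  proof -
    have "s0^2 \<le> (d/2)^2" using s0p s0le by (intro power_mono) auto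
    then show ?thesis unfolding chsq using s0p d0 by (simp add: field_simps)
  qed
  have "2/d^2 > 9/2"
  proof -
    have "d^2 < (2/3)^2" using d0 d23 by (intro power_strict_mono) auto
    then show ?thesis using d0 by (simp add: field_simps)
  qed
  then have ch45: "(ch g)^2 > 9/2" using ch2 by linarith
  have a1: "(88/100 * ch g)^2 = 1936/2500 * (ch g)^2" by (simp add: power2_eq_square)
  have a2: "1936/2500 * (ch g)^2 \<le> (ch g)^2 - 1" using ch45 by linarith
  have "(88/100 * ch g)^2 \<le> (sh g)^2" using a1 a2 shsq by simp
  from power2_le_imp_le[OF this] sh0 have shb: "88/100 * ch g \<le> sh g" by simp
  have b1: "(ch g + sh g)^2 \<ge> (188/100 * ch g)^2" using shb ch0 by (intro power_mono) auto
  have b2: "(188/100 * ch g)^2 = 35344/10000 * (ch g)^2" by (simp add: power2_eq_square)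
  have b3: "35344/10000 * (ch g)^2 \<ge> 35344/10000 * (2/d^2)" using ch2 by (intro mult_left_mono) auto
  have "(7::real) / d^2 \<le> (70688/10000) / d^2" by (rule divide_right_mono) auto
  then have b4: "35344/10000 * (2/d^2) \<ge> 7/d^2" by simp
  have cs7: "(ch g + sh g)^2 \<ge> 7/d^2" using b1 b2 b3 b4 by linarith
  have p7: "7/d^2 > 0" using d0 by simp
  have "t^2 = 1/(ch g + sh g)^2" unfolding t_def by (simp add: power_divide)
  also have "\<dots> \<le> 1/(7/d^2)"
  proof (rule divide_left_mono)
    show "0 < (ch g + sh g)^2 * (7/d^2)" using p7 cs7 by (intro mult_pos_pos) auto
  qed (use cs7 in auto)
  also have "\<dots> = d^2/7" by simp
  finally have t2: "t^2 \<le> d^2/7" .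
  have e19: "(19/50 * d)^2 = 361/2500 * d^2" by (simp add: power2_eq_square)
  have d2: "0 \<le> d^2" by simp
  have "d^2/7 \<le> 361/2500 * d^2" using d2 by linarith
  then have "t^2 \<le> (19/50 * d)^2" using t2 e19 by linarith
  from power2_le_imp_le[OF this] d0 have t19: "t \<le> 19/50 * d" by simp
  have "b/2 \<le> tan (b/2)" using b0 bpi2 by (intro tan_ge_self) auto
  then have bt: "b/2 \<le> t" using tb t_def by simp
  have e1: "d - b/2 \<ge> 31/50 * d" using bt t19 by linarith
  have "tan (d - b/2) \<ge> d - b/2" using e1 d0 d23 pi_gt3 b0 by (intro tan_ge_self) auto
  then have T1: "tan (d - b/2) \<ge> 31/50 * d" using e1 by linarith
  have T2: "tan (d/4) \<ge> d/4" using d0 d23 pi_gt3 by (intro tan_ge_self) auto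
  have "tan (d/4) * tan (d - b/2) \<ge> (d/4) * (31/50 * d)" using T1 T2 d0 by (intro mult_mono) auto
  note X = this
  have "1/(ch g + sh g)^2 = t^2" unfolding t_def by (simp add: power_divide)
  also have "\<dots> \<le> d^2/7" by (rule t2)
  also have "\<dots> \<le> 31/200 * d^2" using d2 by linarith
  also have "\<dots> = (d/4) * (31/50 * d)" by (simp add: power2_eq_square)
  also have "\<dots> \<le> tan (d/4) * tan (d - b/2)" by (rule X)
  finally show "1/(ch g + sh g)^2 \<le> tan (d/4) * tan (d - b/2)" .
qed



lemma cis_shift_int: "cis (x - 2*pi*real_of_int m) = cis x"
proof -
  have "cis (x - 2*pi*real_of_int m) * cis (2*pi*real_of_int m) = cis x" by (simp only: cis_mult) simp
  moreover have "cis (2*pi*real_of_int m) = 1" by (rule cis_multiple_2pi) simp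
  ultimately show ?thesis by simp
qed

lemma idx_eq: "g \<ge> 2 \<Longrightarrow> idx g k = k - nsides g * ((k - 1) div nsides g)"
  unfolding idx_def by (simp add: minus_div_mult_eq_mod[symmetric] algebra_simps)

lemma idx_range: assumes "g \<ge> 2" shows "idx g k \<in> {1..nsides g}"
proof -
  have N: "nsides g > 0" using assms unfolding nsides_def by simp
  have "0 \<le> (k-1) mod nsides g" "(k-1) mod nsides g < nsides g" using N by auto
  then show ?thesis unfolding idx_def by auto
qed

lemma side_dir_shift: "g \<ge> 2 \<Longrightarrow> side_dir g (k - nsides g * m) = side_dir g k - 2*pi*real_of_int m"
  unfolding side_dir_def nsides_def by (simp add: field_simps)

lemma Pt_idx: "g \<ge> 2 \<Longrightarrow> Pt g (idx g k) = Pt g k"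
proof -
  assume g: "g \<ge> 2"
  have "side_dir g (idx g k) = side_dir g k - 2*pi*real_of_int ((k - 1) div nsides g)"
    unfolding idx_eq[OF g] by (rule side_dir_shift[OF g])
  then have e2: "side_dir g (idx g k) - beta g = (side_dir g k - beta g) - 2*pi*real_of_int ((k - 1) div nsides g)"
    by simp
  show ?thesis unfolding Pt_def e2 cis_shift_int ..
qed

lemma Qt_idx: "g \<ge> 2 \<Longrightarrow> Qt g (idx g k) = Qt g k"
proof -
  assume g: "g \<ge> 2"
  have e: "idx g k - 1 = (k - 1) - nsides g * ((k - 1) div nsides g)" unfolding idx_eq[OF g] by simp
  have "side_dir g (idx g k - 1) = side_dir g (k - 1) - 2*pi*real_of_int ((k - 1) div nsides g)"
    unfolding e by (rule side_dir_shift[OF g])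
  then have e2: "side_dir g (idx g k - 1) + beta g = (side_dir g (k - 1) + beta g) - 2*pi*real_of_int ((k - 1) div nsides g)" by simp
  show ?thesis unfolding Qt_def e2 cis_shift_int ..
qed

lemma sd_eq: "g \<ge> 2 \<Longrightarrow> side_dir g j = (real_of_int j - 1/2) * (2*pi/real_of_int (nsides g))"
  unfolding side_dir_def by simp

lemma cos_ne_m1: "sin (t::real) \<noteq> 0 \<Longrightarrow> cos t \<noteq> -1"
proof
  assume s: "sin t \<noteq> 0" and c: "cos t = -1"
  have "(sin t)^2 + (cos t)^2 = 1" by (rule sin_cos_squared_add)
  then have "(sin t)^2 = 0" using c by simp
  then show False using s by simp
qed

lemma tan_half_cis: "Im (cis t) / (1 + Re (cis t)) = tan ((t::real)/2)"
  using tan_half[of "t/2"] by (simp add: add.commute)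


theorem lemma3p5:
  fixes g i :: int and A :: "int \<Rightarrow> complex" and x :: complex
  assumes "g \<ge> 2"
    and "\<forall>j\<in>{1..nsides g}. A j \<in> arc_oo (Pt g j) (Qt g j)"
    and "i \<in> {1..nsides g}"
    and "x \<in> arc_oo (Pt g i) (Qt g i)"
  shows "\<not> (Tmap g i x \<in> arc_co (A (idx g (rho g i + 1))) (Qt g (rho g i + 1)) \<and>
             Tmap g (i - 1) x \<in> arc_oc (Pt g (theta g (i - 1))) (A (idx g (theta g (i - 1)))))"
proof
  assume H: "Tmap g i x \<in> arc_co (A (idx g (rho g i + 1))) (Qt g (rho g i + 1)) \<and>
             Tmap g (i - 1) x \<in> arc_oc (Pt g (theta g (i - 1))) (A (idx g (theta g (i - 1))))"
  have g: "g \<ge> 2" by (rule assms(1))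
  define n where "n = real_of_int (nsides g)"
  define d where "d = 2*pi/n"
  define b where "b = beta g"
  define k where "k = 1/(ch g + sh g)^2"
  note num = numeric[OF g, folded n_def, folded d_def, folded b_def, folded k_def]
  have d0: "0 < d" and d23: "d < 2/3" and ch1: "ch g > 1" and sh0: "sh g > 0"
    and chsh: "(ch g)^2 - (sh g)^2 = 1" and b0: "0 < b" and bpi2: "b < pi/2"
    and bd2: "d/2 < b" and bd: "b < d" and K: "k \<le> tan (d/4) * tan (d - b/2)"
    using num by auto
  have p3: "3 < pi" by (rule pi_gt3)
  have sd: "\<And>j. side_dir g j = (real_of_int j - 1/2) * d"
    unfolding side_dir_def d_def n_def by simp
  have Pt: "\<And>j. Pt g j = cis ((real_of_int j - 1/2) * d - b)"
    unfolding Pt_def sd b_def ..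
  have Qt: "\<And>j. Qt g j = cis ((real_of_int j - 3/2) * d + b)"
    unfolding Qt_def sd b_def by (simp add: algebra_simps)
  have cmod_cis: "\<And>t. cmod (cis t) = 1" by simp

  define u where "u = cis (pi - side_dir g i) * x"
  define c0 where "c0 = cis (side_dir g i - pi)"
  have xu: "x = c0 * u" unfolding u_def c0_def
    by (simp add: mult.assoc[symmetric] cis_mult)
  have P0: "Pt g i = c0 * cis (pi - b)" unfolding c0_def Pt sd by (simp add: cis_mult algebra_simps)
  have Q0: "Qt g i = c0 * cis (pi - d + b)" unfolding c0_def Qt sd by (simp add: cis_mult algebra_simps)
  have "c0 * u \<in> arc_oo (c0 * cis (pi - b)) (c0 * cis (pi - d + b))"
    using assms(4) unfolding xu P0 Q0 .
  then have um: "u \<in> arc_oo (cis (pi - b)) (cis (pi - d + b))"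
    using arc_oo_rot[of c0] unfolding c0_def by simp
  have e1: "-pi < pi - b" "pi - b < pi - d + b" "pi - d + b \<le> pi" using b0 bpi2 bd bd2 by auto
  have ua: "pi - b < Arg u \<and> Arg u < pi - d + b \<and> cmod u = 1"
    by (rule arc_oo_Arg[OF e1 um])
  define \<alpha> where "\<alpha> = Arg u"
  have u\<alpha>: "u = cis \<alpha>" unfolding \<alpha>_def using unit_cis_Arg ua by simp
  have \<alpha>1: "pi - b < \<alpha>" "\<alpha> < pi - d + b" using ua \<alpha>_def by auto

  define \<sigma> where "\<sigma> = sigma g i"
  have rho1: "rho g i + 1 = \<sigma> + 2" unfolding rho_def \<sigma>_def by simp
  define c1 where "c1 = cis (side_dir g \<sigma>)"
  have c1n: "cmod c1 = 1" "c1 \<noteq> 0" unfolding c1_def by auto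
  have T1eq: "Tmap g i x = c1 * transl g u" unfolding Tmap_def c1_def u_def \<sigma>_def ..
  have P1: "Pt g (\<sigma>+2) = c1 * cis (2*d - b)" unfolding c1_def Pt sd by (simp add: cis_mult algebra_simps)
  have Q1: "Qt g (\<sigma>+2) = c1 * cis (d + b)" unfolding c1_def Qt sd by (simp add: cis_mult algebra_simps)
  define j1 where "j1 = idx g (\<sigma>+2)"
  have "A j1 \<in> arc_oo (Pt g j1) (Qt g j1)" using assms(2) idx_range[OF g] unfolding j1_def by blast
  then have A1: "A j1 \<in> arc_oo (Pt g (\<sigma>+2)) (Qt g (\<sigma>+2))" unfolding j1_def Pt_idx[OF g] Qt_idx[OF g] .
  define a1 where "a1 = A j1 / c1"
  have Aa1: "A j1 = c1 * a1" unfolding a1_def using c1n by simp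
  have "c1 * a1 \<in> arc_oo (c1 * cis (2*d - b)) (c1 * cis (d + b))" using A1 unfolding Aa1 P1 Q1 .
  then have a1m: "a1 \<in> arc_oo (cis (2*d - b)) (cis (d + b))" using arc_oo_rot[OF c1n(1)] by simp
  have e2: "-pi < 2*d - b" "2*d - b < d + b" "d + b \<le> pi" using b0 bpi2 bd bd2 d23 p3 by auto
  have a1a: "2*d - b < Arg a1 \<and> Arg a1 < d + b \<and> cmod a1 = 1" by (rule arc_oo_Arg[OF e2 a1m])
  have a1c: "a1 = cis (Arg a1)" using unit_cis_Arg a1a by simp
  have "c1 * transl g u \<in> arc_co (c1 * a1) (c1 * cis (d + b))"
    using H unfolding rho1 T1eq j1_def[symmetric] Aa1 Q1 by blast
  then have "transl g u \<in> arc_co (cis (Arg a1)) (cis (d + b))" using arc_co_rot[OF c1n(1)] a1c by simp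
  moreover have e3: "-pi < Arg a1" "Arg a1 < d + b" "d + b \<le> pi" using a1a e2 by auto
  ultimately have tua: "Arg a1 \<le> Arg (transl g u) \<and> Arg (transl g u) < d + b \<and> cmod (transl g u) = 1"
    using arc_co_Arg by blast
  define \<phi> where "\<phi> = Arg (transl g u)"
  have tu\<phi>: "transl g u = cis \<phi>" unfolding \<phi>_def using unit_cis_Arg tua by simp
  have \<phi>1: "2*d - b < \<phi>" "\<phi> < d + b" using tua a1a \<phi>_def by auto

  define \<tau> where "\<tau> = sigma g (i - 1)"
  have th1: "theta g (i - 1) = \<tau> - 1" unfolding theta_def \<tau>_def by simp
  define c2 where "c2 = cis (side_dir g \<tau>)"
  have c2n: "cmod c2 = 1" "c2 \<noteq> 0" unfolding c2_def by auto
  define u' where "u' = cis (pi - side_dir g (i - 1)) * x"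
  have T2eq: "Tmap g (i - 1) x = c2 * transl g u'" unfolding Tmap_def c2_def u'_def \<tau>_def ..
  have u'\<alpha>: "u' = cis (\<alpha> + d)"
  proof -
    have "u' = (cis (pi - side_dir g (i - 1)) * c0) * u" unfolding u'_def xu by (simp add: mult.assoc)
    also have "cis (pi - side_dir g (i - 1)) * c0 = cis d" unfolding c0_def sd by (simp add: cis_mult algebra_simps)
    finally show ?thesis unfolding u\<alpha> by (simp add: cis_mult add.commute)
  qed
  have P2: "Pt g (\<tau> - 1) = c2 * cis (- d - b)" unfolding c2_def Pt sd by (simp add: cis_mult algebra_simps)
  have Q2: "Qt g (\<tau> - 1) = c2 * cis (- 2*d + b)" unfolding c2_def Qt sd by (simp add: cis_mult algebra_simps)
  define j2 where "j2 = idx g (\<tau> - 1)"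
  have "A j2 \<in> arc_oo (Pt g j2) (Qt g j2)" using assms(2) idx_range[OF g] unfolding j2_def by blast
  then have A2: "A j2 \<in> arc_oo (Pt g (\<tau> - 1)) (Qt g (\<tau> - 1))" unfolding j2_def Pt_idx[OF g] Qt_idx[OF g] .
  define a2 where "a2 = A j2 / c2"
  have Aa2: "A j2 = c2 * a2" unfolding a2_def using c2n by simp
  have "c2 * a2 \<in> arc_oo (c2 * cis (- d - b)) (c2 * cis (- 2*d + b))" using A2 unfolding Aa2 P2 Q2 .
  then have a2m: "a2 \<in> arc_oo (cis (- d - b)) (cis (- 2*d + b))" using arc_oo_rot[OF c2n(1)] by simp
  have e4: "-pi < - d - b" "- d - b < - 2*d + b" "- 2*d + b \<le> pi" using b0 bpi2 bd bd2 d23 p3 by auto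
  have a2a: "- d - b < Arg a2 \<and> Arg a2 < - 2*d + b \<and> cmod a2 = 1" by (rule arc_oo_Arg[OF e4 a2m])
  have a2c: "a2 = cis (Arg a2)" using unit_cis_Arg a2a by simp
  have "c2 * transl g u' \<in> arc_oc (c2 * cis (- d - b)) (c2 * a2)"
    using H unfolding th1 T2eq j2_def[symmetric] Aa2 P2 by blast
  then have "transl g u' \<in> arc_oc (cis (- d - b)) (cis (Arg a2))" using arc_oc_rot[OF c2n(1)] a2c by simp
  moreover have e5: "-pi < - d - b" "- d - b < Arg a2" "Arg a2 \<le> pi" using a2a e4 by auto
  ultimately have tua2: "- d - b < Arg (transl g u') \<and> Arg (transl g u') \<le> Arg a2 \<and> cmod (transl g u') = 1"
    using arc_oc_Arg by blast
  define \<psi> where "\<psi> = Arg (transl g u')"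
  have tu\<psi>: "transl g u' = cis \<psi>" unfolding \<psi>_def using unit_cis_Arg tua2 by simp
  have \<psi>1: "- d - b < \<psi>" "\<psi> < - 2*d + b" using tua2 a2a \<psi>_def by auto

  have chsh': "(ch g)^2 - (sh g)^2 = 1" "ch g > 0" "sh g \<ge> 0" using chsh ch1 sh0 by auto
  have S1: "tan (\<phi>/2) = k * tan (\<alpha>/2)"
  proof -
    have s: "sin \<alpha> > 0" using \<alpha>1 b0 bd bpi2 p3 by (intro sin_gt_zero) auto
    have "Re u \<noteq> -1" unfolding u\<alpha> using cos_ne_m1[of \<alpha>] s by simp
    then have "Im (transl g u) / (1 + Re (transl g u)) = k * (Im u / (1 + Re u))"
      unfolding transl_def k_def using transl_S[OF chsh' _ ] ua by blast
    then have "Im (cis \<phi>) / (1 + Re (cis \<phi>)) = k * (Im u / (1 + Re u))" by (simp only: tu\<phi>)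
    then show ?thesis unfolding u\<alpha> tan_half_cis .
  qed
  have S2: "tan (\<psi>/2) = k * tan ((\<alpha> + d)/2)"
  proof -
    have s: "sin (\<alpha> + d) < 0" using \<alpha>1 b0 bd p3 d23 by (intro sin_lt_zero) auto
    have "Re u' \<noteq> -1" unfolding u'\<alpha> using cos_ne_m1[of "\<alpha> + d"] s by simp
    moreover have "cmod u' = 1" unfolding u'\<alpha> by simp
    ultimately have "Im (transl g u') / (1 + Re (transl g u')) = k * (Im u' / (1 + Re u'))"
      unfolding transl_def k_def using transl_S[OF chsh' _ ] by blast
    then have "Im (cis \<psi>) / (1 + Re (cis \<psi>)) = k * (Im u' / (1 + Re u'))" by (simp only: tu\<psi>)
    then show ?thesis unfolding u'\<alpha> tan_half_cis .
  qed

  define T0 where "T0 = tan (d - b/2)"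
  have k0: "k > 0" unfolding k_def using ch1 sh0 by simp
  have I1: "k * tan (\<alpha>/2) > T0"
  proof -
    have "tan (d - b/2) < tan (\<phi>/2)" using \<phi>1 b0 bd bpi2 d23 p3 by (intro tan_monotone) auto
    then show ?thesis unfolding T0_def S1 .
  qed
  define \<gamma> where "\<gamma> = pi - (\<alpha> + d)/2"
  have tg: "tan ((\<alpha> + d)/2) = - tan \<gamma>"
  proof -
    have "tan ((\<alpha> + d)/2) = tan (- \<gamma> + pi)" unfolding \<gamma>_def by simp
    also have "\<dots> = tan (- \<gamma>)" by (rule tan_periodic_pi)
    finally show ?thesis by (simp add: tan_minus)
  qed
  have I2: "k * tan \<gamma> > T0"
  proof -
    have "tan (\<psi>/2) < tan (- (d - b/2))" using \<psi>1 b0 bd bpi2 d23 p3 by (intro tan_monotone) auto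
    then show ?thesis unfolding T0_def S2 tg tan_minus by simp
  qed
  have sum: "\<alpha>/2 + \<gamma> = pi - d/2" unfolding \<gamma>_def by (simp add: field_simps)
  have ranges: "0 < \<alpha>/2" "\<alpha>/2 < pi/2" "0 < \<gamma>" "\<gamma> < pi/2" using \<alpha>1 b0 bd bpi2 unfolding \<gamma>_def by auto
  define m where "m = pi/2 - d/4"
  have mr: "0 < m" "m < pi/2" unfolding m_def using d0 d23 p3 by auto
  have tm: "tan m * tan (d/4) = 1"
  proof -
    have "tan m = inverse (tan (d/4))" unfolding m_def by (rule tan_cot)
    moreover have "tan (d/4) > 0" using d0 d23 p3 by (intro tan_gt_zero) auto
    ultimately show ?thesis by simp
  qed
  have "k * tan m > T0"
  proof (cases "\<alpha>/2 \<le> m")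
    case True
    have "tan (\<alpha>/2) \<le> tan m" using True ranges mr by (intro tan_mono_le) auto
    then have "k * tan (\<alpha>/2) \<le> k * tan m" using k0 by simp
    then show ?thesis using I1 by linarith
  next
    case False
    then have "\<gamma> \<le> m" using sum unfolding m_def by linarith
    then have "tan \<gamma> \<le> tan m" using ranges mr by (intro tan_mono_le) auto
    then have "k * tan \<gamma> \<le> k * tan m" using k0 by simp
    then show ?thesis using I2 by linarith
  qed
  moreover have t4: "tan (d/4) > 0" using d0 d23 p3 by (intro tan_gt_zero) auto
  ultimately have "k * tan m * tan (d/4) > T0 * tan (d/4)" by simp
  then have "k > T0 * tan (d/4)" using tm by (simp add: mult.assoc)
  then show False using K unfolding T0_def by (simp add: mult.commute)
qed

end
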